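(* Let $H:\mathbb{R}^2\to\mathbb{R}$ satisfy (C3), (CNH) and (CVX). Then: (UC) for every $h\in\mathbb{R}$ there exists $\mathcal{U}_h\in\mathbb{R}$ such that for all $(x,u)\in\mathbb{R}^2$, if $|H(x,u)|\le h$ then $|u|\le\mathcal{U}_h$; and (WGNL) for a.e. $x\in\mathbb{R}$ the set $\{w\in\mathbb{R}:\partial^2_{ww}H(x,w)=0\}$ has empty interior.
   Context: (C3) $H\in C^3(\mathbb{R}^2;\mathbb{R})$; (CNH) there exists $X>0$ such that $\partial_xH(x,p)=0$ for all $p$ whenever $|x|\ge X$; (CVX) for every $x\in\mathbb{R}$, $p\mapsto\partial_pH(x,p)$ is an increasing $C^1$-diffeomorphism of $\mathbb{R}$ onto itself. *)

theory Defs
  imports "HOL-Analysis.Analysis"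
begin

fun Ck2 :: "nat \<Rightarrow> (real \<times> real \<Rightarrow> real) \<Rightarrow> bool" where
  "Ck2 0 f = continuous_on UNIV f"
| "Ck2 (Suc k) f = (\<exists>f1 f2. (\<forall>z. (f has_derivative (\<lambda>(a, b). f1 z * a + f2 z * b)) (at z))
                          \<and> Ck2 k f1 \<and> Ck2 k f2)"

definition partial_x :: "(real \<times> real \<Rightarrow> real) \<Rightarrow> real \<Rightarrow> real \<Rightarrow> real" where
  "partial_x H x p = deriv (\<lambda>t. H (t, p)) x"

definition partial_p :: "(real \<times> real \<Rightarrow> real) \<Rightarrow> real \<Rightarrow> real \<Rightarrow> real" where
  "partial_p H x p = deriv (\<lambda>q. H (x, q)) p"

definition partial_pp :: "(real \<times> real \<Rightarrow> real) \<Rightarrow> real \<Rightarrow> real \<Rightarrow> real" where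
  "partial_pp H x p = deriv (\<lambda>q. partial_p H x q) p"

definition incr_C1_diffeo :: "(real \<Rightarrow> real) \<Rightarrow> bool" where
  "incr_C1_diffeo g \<longleftrightarrow> strict_mono g \<and> bij g \<and> g C1_differentiable_on UNIV
      \<and> inv g C1_differentiable_on UNIV"

end

theory Submission
  imports Defs
begin

lemma Ck2_Suc_cont:
  assumes "Ck2 (Suc k) f" shows "continuous_on UNIV f"
proof -
  from assms obtain f1 f2 where d: "\<forall>z. (f has_derivative (\<lambda>(a, b). f1 z * a + f2 z * b)) (at z)"
    by auto
  show ?thesis
    using d has_derivative_continuous continuous_at_imp_continuous_on by blast
qed

lemma line_derivs:
  fixes H :: "real \<times> real \<Rightarrow> real"
  assumes d: "\<forall>z. (H has_derivative (\<lambda>(a, b). f1 z * a + f2 z * b)) (at z)"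
  shows "((\<lambda>q. H (x, q)) has_real_derivative f2 (x, q)) (at q)"
    and "((\<lambda>t. H (t, p)) has_real_derivative f1 (t, p)) (at t)"
proof -
  have a: "((\<lambda>q. (x, q)) has_derivative (\<lambda>b. (0, b))) (at q)"
    by (auto intro!: derivative_eq_intros)
  have "((\<lambda>q. H (x, q)) has_derivative (\<lambda>b. (\<lambda>(a, b). f2 (x,q) * b + f1 (x,q) * a) (0, b))) (at q)"
    using has_derivative_compose[OF a d[rule_format, of "(x,q)"]] by (simp add: ac_simps)
  then show "((\<lambda>q. H (x, q)) has_real_derivative f2 (x, q)) (at q)"
    by (simp add: has_field_derivative_def mult.commute[of _ "f2 (x,q)"])
  have b: "((\<lambda>t. (t, p)) has_derivative (\<lambda>b. (b, 0))) (at t)"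
    by (auto intro!: derivative_eq_intros)
  have "((\<lambda>t. H (t, p)) has_derivative (\<lambda>b. (\<lambda>(a, b). f1 (t,p) * a + f2 (t,p) * b) (b, 0))) (at t)"
    using has_derivative_compose[OF b d[rule_format, of "(t,p)"]] by simp
  then show "((\<lambda>t. H (t, p)) has_real_derivative f1 (t, p)) (at t)"
    by (simp add: has_field_derivative_def mult.commute[of _ "f1 (t,p)"])
qed

lemma unif_bound:
  fixes G :: "real \<times> real \<Rightarrow> real"
  assumes cG: "continuous_on UNIV G" and mG: "\<And>x. mono (\<lambda>p. G (x, p))"
    and sG: "\<And>x. \<exists>q. G (x, q) > 1" and K: "compact K"
  shows "\<exists>n::nat. \<forall>x\<in>K. G (x, real n) \<ge> 1"
proof (rule ccontr)
  assume "\<not> ?thesis"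
  then have "\<forall>n. \<exists>x. x \<in> K \<and> G (x, real n) < 1" by (auto simp: not_le)
  then obtain s where s: "\<And>n. s n \<in> K" "\<And>n. G (s n, real n) < 1" by metis
  from compact_imp_seq_compact[OF K] s(1) obtain l r where l: "l \<in> K" "strict_mono r"
    "(s \<circ> r) \<longlonglongrightarrow> l" unfolding seq_compact_def by metis
  obtain q where q: "G (l, q) > 1" using sG by blast
  obtain n0 :: nat where n0: "q \<le> real n0" using real_arch_simple by blast
  have q0: "G (l, real n0) > 1" using q mG[of l] n0 by (smt (verit) monoD)
  have lim: "(\<lambda>k. G ((s \<circ> r) k, real n0)) \<longlonglongrightarrow> G (l, real n0)"
  proof -
    have "((\<lambda>k. ((s \<circ> r) k, real n0)) \<longlonglongrightarrow> (l, real n0))"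
      using l(3) by (intro tendsto_Pair) (auto simp: comp_def)
    moreover have "isCont G (l, real n0)" using cG by (simp add: continuous_on_eq_continuous_at)
    ultimately show ?thesis by (rule isCont_tendsto_compose[rotated])
  qed
  have "\<forall>\<^sub>F k in sequentially. G ((s \<circ> r) k, real n0) \<le> 1"
  proof (rule eventually_sequentiallyI[of n0])
    fix k assume "n0 \<le> k"
    then have "real n0 \<le> real (r k)" using seq_suble[OF l(2), of k] by simp
    then have "G (s (r k), real n0) \<le> G (s (r k), real (r k))" using mG[of "s (r k)"] unfolding mono_def by blast
    then show "G ((s \<circ> r) k, real n0) \<le> 1" using s(2)[of "r k"] by simp
  qed
  then have "G (l, real n0) \<le> 1" using lim by (simp add: tendsto_upperbound)
  then show False using q0 by simp
qed

theorem proposition2p4: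
  fixes H :: "real \<times> real \<Rightarrow> real"
  assumes C3: "Ck2 3 H"
    and CNH: "\<exists>X>0. \<forall>x p. \<bar>x\<bar> \<ge> X \<longrightarrow> partial_x H x p = 0"
    and CVX: "\<forall>x. incr_C1_diffeo (\<lambda>p. partial_p H x p)"
  shows "(\<forall>h::real. \<exists>U::real. \<forall>x u. \<bar>H (x, u)\<bar> \<le> h \<longrightarrow> \<bar>u\<bar> \<le> U)
         \<and> (AE x in lborel. interior {w. partial_pp H x w = 0} = {})"
proof
  have e3: "(3::nat) = Suc 2" by simp
  obtain f1 f2 where d: "\<forall>z. (H has_derivative (\<lambda>(a, b). f1 z * a + f2 z * b)) (at z)"
    and c1: "Ck2 2 f1" and c2: "Ck2 2 f2"
    using C3 unfolding e3 Ck2.simps(2) by blast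
  have e2: "(2::nat) = Suc 1" by simp
  have cf2: "continuous_on UNIV f2" using c2 Ck2_Suc_cont unfolding e2 by blast
  have cH: "continuous_on UNIV H"
    using d has_derivative_continuous continuous_at_imp_continuous_on by blast
  have Dp: "\<And>x q. ((\<lambda>q. H (x, q)) has_real_derivative f2 (x, q)) (at q)"
    using line_derivs(1)[OF d] by blast
  have Dx: "\<And>t p. ((\<lambda>t. H (t, p)) has_real_derivative f1 (t, p)) (at t)"
    using line_derivs(2)[OF d] by blast
  have pp: "\<And>x p. partial_p H x p = f2 (x, p)"
    unfolding partial_p_def using Dp DERIV_imp_deriv by blast
  have px: "\<And>x p. partial_x H x p = f1 (x, p)"
    unfolding partial_x_def using Dx DERIV_imp_deriv by blast
  have sm: "\<And>x. strict_mono (\<lambda>p. f2 (x, p))" and bj: "\<And>x. bij (\<lambda>p. f2 (x, p))"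
    using CVX unfolding incr_C1_diffeo_def pp by auto
  have mono2: "\<And>x. mono (\<lambda>p. f2 (x, p))" using sm strict_mono_mono by blast
  have surj2: "\<And>x y. \<exists>p. f2 (x, p) = y" using bj unfolding bij_def surj_def by metis
  show "\<forall>h::real. \<exists>U::real. \<forall>x u. \<bar>H (x, u)\<bar> \<le> h \<longrightarrow> \<bar>u\<bar> \<le> U"
  proof
    fix h :: real
    obtain X where X: "X > 0" "\<forall>x p. \<bar>x\<bar> \<ge> X \<longrightarrow> f1 (x, p) = 0" using CNH px by metis
    define c where "c x = max (-X) (min X x)" for x
    have cK: "c x \<in> {-X..X}" for x using X(1) unfolding c_def by auto
    have clamp: "H (x, u) = H (c x, u)" for x u
    proof -
      consider "x > X" | "x < -X" | "-X \<le> x \<and> x \<le> X" by linarith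
      then show ?thesis
      proof cases
        case 1
        then obtain z where "X < z" "z < x" "H (x, u) - H (X, u) = (x - X) * f1 (z, u)"
          using MVT2[of X x "\<lambda>t. H (t, u)" "\<lambda>t. f1 (t, u)"] Dx by blast
        moreover have "f1 (z, u) = 0" using X(2) \<open>X < z\<close> X(1) by auto
        ultimately show ?thesis using 1 X(1) unfolding c_def by simp
      next
        case 2
        then obtain z where "x < z" "z < -X" "H (-X, u) - H (x, u) = (-X - x) * f1 (z, u)"
          using MVT2[of x "-X" "\<lambda>t. H (t, u)" "\<lambda>t. f1 (t, u)"] Dx by blast
        moreover have "f1 (z, u) = 0" using X(2) \<open>z < -X\<close> X(1) by auto
        ultimately show ?thesis using 2 X(1) unfolding c_def by simp
      qed (simp add: c_def)
    qed
    have K: "compact {-X..X}" by simp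
    have cG1: "continuous_on UNIV f2" by (rule cf2)
    obtain n1 :: nat where n1: "\<forall>x\<in>{-X..X}. f2 (x, real n1) \<ge> 1"
      using unif_bound[OF cf2 mono2 _ K] surj2 by (metis less_numeral_extra(4) lt_ex one_less_numeral_iff semiring_norm(76) zero_less_one)
    define G where "G z = - f2 (fst z, - snd z)" for z
    have cG: "continuous_on UNIV G" unfolding G_def
      by (intro continuous_intros continuous_on_compose2[OF cf2]) auto
    have mG: "mono (\<lambda>p. G (x, p))" for x
      unfolding G_def mono_def using mono2[of x] by (auto simp: mono_def)
    have sG: "\<exists>q. G (x, q) > 1" for x
    proof -
      obtain p where "f2 (x, p) = -2" using surj2 by blast
      then have "G (x, -p) > 1" unfolding G_def by simp
      then show ?thesis by blast
    qed
    obtain n2 :: nat where n2: "\<forall>x\<in>{-X..X}. f2 (x, - real n2) \<le> -1"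
      using unif_bound[OF cG mG sG K] unfolding G_def by fastforce
    define Q1 where "Q1 = real n1"
    define Q2 where "Q2 = - real n2"
    have ch: "continuous_on {-X..X} (\<lambda>x. H (x, Q))" for Q
      by (rule continuous_on_compose2[OF cH]) (auto intro!: continuous_intros)
    obtain m1 where m1: "\<forall>x\<in>{-X..X}. \<bar>H (x, Q1)\<bar> \<le> m1"
      using compact_imp_bounded[OF compact_continuous_image[OF ch K]] unfolding bounded_iff by auto
    obtain m2 where m2: "\<forall>x\<in>{-X..X}. \<bar>H (x, Q2)\<bar> \<le> m2"
      using compact_imp_bounded[OF compact_continuous_image[OF ch K]] unfolding bounded_iff by auto
    have up: "H (x, u) \<ge> H (x, Q1) + (u - Q1)" if "x \<in> {-X..X}" "u > Q1" for x u
    proof -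
      obtain z where z: "Q1 < z" "z < u" "H (x, u) - H (x, Q1) = (u - Q1) * f2 (x, z)"
        using MVT2[of Q1 u "\<lambda>q. H (x, q)" "\<lambda>q. f2 (x, q)"] Dp \<open>u > Q1\<close> by blast
      have "f2 (x, z) \<ge> 1" using n1 that(1) mono2[of x] z(1) unfolding Q1_def
        by (smt (verit) monoD)
      then have "(u - Q1) * f2 (x, z) \<ge> (u - Q1) * 1" using \<open>u > Q1\<close>
        by (intro mult_left_mono) auto
      then show ?thesis using z(3) by simp
    qed
    have down: "H (x, u) \<ge> H (x, Q2) + (Q2 - u)" if "x \<in> {-X..X}" "u < Q2" for x u
    proof -
      obtain z where z: "u < z" "z < Q2" "H (x, Q2) - H (x, u) = (Q2 - u) * f2 (x, z)"
        using MVT2[of u Q2 "\<lambda>q. H (x, q)" "\<lambda>q. f2 (x, q)"] Dp \<open>u < Q2\<close> by blast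
      have "f2 (x, z) \<le> -1" using n2 that(1) mono2[of x] z(2) unfolding Q2_def
        by (smt (verit) monoD)
      then have "(Q2 - u) * f2 (x, z) \<le> (Q2 - u) * (-1)" using \<open>u < Q2\<close>
        by (intro mult_left_mono) auto
      then show ?thesis using z(3) by simp
    qed
    show "\<exists>U. \<forall>x u. \<bar>H (x, u)\<bar> \<le> h \<longrightarrow> \<bar>u\<bar> \<le> U"
    proof (intro exI allI impI)
      fix x u assume hu: "\<bar>H (x, u)\<bar> \<le> h"
      have hu': "\<bar>H (c x, u)\<bar> \<le> h" using hu clamp by simp
      have b1: "u \<le> Q1 + h + m1"
      proof (cases "u > Q1")
        case True
        then have "H (c x, u) \<ge> H (c x, Q1) + (u - Q1)" using up cK by blast
        moreover have "\<bar>H (c x, Q1)\<bar> \<le> m1" using m1 cK by blast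
        ultimately show ?thesis using hu' by linarith
      next
        case False
        have "0 \<le> m1" using m1 cK by (meson abs_ge_zero order_trans)
        moreover have "0 \<le> h" using hu by linarith
        ultimately show ?thesis using False by linarith
      qed
      have b2: "u \<ge> Q2 - h - m2"
      proof (cases "u < Q2")
        case True
        then have "H (c x, u) \<ge> H (c x, Q2) + (Q2 - u)" using down cK by blast
        moreover have "\<bar>H (c x, Q2)\<bar> \<le> m2" using m2 cK by blast
        ultimately show ?thesis using hu' by linarith
      next
        case False
        have "0 \<le> m2" using m2 cK by (meson abs_ge_zero order_trans)
        moreover have "0 \<le> h" using hu by linarith
        ultimately show ?thesis using False by linarith
      qed
      show "\<bar>u\<bar> \<le> \<bar>Q1 + h + m1\<bar> + \<bar>Q2 - h - m2\<bar>" using b1 b2 by linarith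
    qed
  qed
  show "AE x in lborel. interior {w. partial_pp H x w = 0} = {}"
  proof (rule AE_I2)
    fix x
    let ?g = "\<lambda>p. partial_p H x p"
    have smg: "strict_mono ?g" and C1: "?g C1_differentiable_on UNIV"
      using CVX unfolding incr_C1_diffeo_def by auto
    have dg: "\<And>q. (?g has_real_derivative partial_pp H x q) (at q)"
      using C1 unfolding C1_differentiable_on_eq partial_pp_def
      by (simp add: DERIV_deriv_iff_real_differentiable)
    show "interior {w. partial_pp H x w = 0} = {}"
    proof (rule ccontr)
      assume "interior {w. partial_pp H x w = 0} \<noteq> {}"
      then obtain w where "w \<in> interior {w. partial_pp H x w = 0}" by blast
      then obtain e where e: "e > 0" "ball w e \<subseteq> {w. partial_pp H x w = 0}"
        using mem_interior by blast
      obtain z where z: "w < z" "z < w + e/2" "?g (w + e/2) - ?g w = (w + e/2 - w) * partial_pp H x z"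
        using MVT2[of w "w + e/2" ?g "partial_pp H x"] dg e(1) by auto
      have "z \<in> ball w e" using z e(1) by (auto simp: dist_real_def)
      then have "partial_pp H x z = 0" using e(2) by blast
      then have "?g (w + e/2) = ?g w" using z(3) by simp
      moreover have "?g w < ?g (w + e/2)" using smg e(1) by (simp add: strict_monoD)
      ultimately show False by simp
    qed
  qed
qed

end
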